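(* Let $\mathbb{T}$ be a time scale, let $I\subseteq\mathbb{R}$ be an interval, write $I_{\mathbb{T}}:=I\cap\mathbb{T}$, and let $t_0\in I_{\mathbb{T}}$. Let $p,q\in\mathbb{R}$ be constants and put $k:=1+|p|+|q|$. If $y$ is any solution on $I_{\mathbb{T}}$ of the homogeneous dynamic equation $$y^{\Delta\Delta}(t)+p\,y^{\Delta}(t)+q\,y(t)=0,$$ then $$\|y(t)\|_2\le \|y(t_0)\|_2\, e_k(t,t_0)\qquad\text{for all } t\in I_{\mathbb{T}},\ t\ge t_0,$$ where $\|y(t)\|_2:=\big((y(t))^2+(y^\Delta(t))^2\big)^{1/2}$.
   Context: A time scale $\mathbb{T}$ is a nonempty closed subset of $\mathbb{R}$. The forward jump operator is $\sigma(t):=\inf\{s\in\mathbb{T}:s>t\}$, the graininess is $\mu(t):=\sigma(t)-t$, and $y^\sigma:=y\circ\sigma$. The delta derivative is $y^\Delta(t):=\lim_{s\to t}\frac{y^\sigma(t)-y(s)}{\sigma(t)-s}$ (for $t\in\mathbb{T}^\kappa$), and $y^{\Delta\Delta}=(y^\Delta)^\Delta$. For a right-dense continuous function $\ell$ with $1+\mu(t)\ell(t)\neq0$, the time-scale exponential $e_\ell(\cdot,t_0)$ is the unique solution of $\phi^\Delta(t)=\ell(t)\phi(t)$, $\phi(t_0)=1$; for a positive constant $k$ this applies. *)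

theory Defs
  imports "HOL-Analysis.Analysis"
begin

definition time_scale :: "real set \<Rightarrow> bool" where
  "time_scale T \<longleftrightarrow> T \<noteq> {} \<and> closed T"

text \<open>Forward jump operator, with the convention inf {} = t (i.e. sigma(max T) = max T).\<close>
definition ts_sigma :: "real set \<Rightarrow> real \<Rightarrow> real" where
  "ts_sigma T t = (if {s \<in> T. s > t} = {} then t else Inf {s \<in> T. s > t})"

definition ts_rho :: "real set \<Rightarrow> real \<Rightarrow> real" where
  "ts_rho T t = (if {s \<in> T. s < t} = {} then t else Sup {s \<in> T. s < t})"

definition ts_mu :: "real set \<Rightarrow> real \<Rightarrow> real" where
  "ts_mu T t = ts_sigma T t - t"

text \<open>T^kappa: remove a left-scattered maximum, if any.\<close>
definition ts_kappa :: "real set \<Rightarrow> real set" where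
  "ts_kappa T = (if \<exists>m\<in>T. (\<forall>s\<in>T. s \<le> m) \<and> ts_rho T m < m
                 then T - {m. m \<in> T \<and> (\<forall>s\<in>T. s \<le> m)} else T)"

definition has_delta_derivative ::
  "real set \<Rightarrow> (real \<Rightarrow> real) \<Rightarrow> real \<Rightarrow> real \<Rightarrow> bool" where
  "has_delta_derivative T f D t \<longleftrightarrow>
     (\<forall>\<epsilon>>0. \<exists>\<delta>>0. \<forall>s\<in>T. \<bar>s - t\<bar> < \<delta> \<longrightarrow>
        \<bar>f (ts_sigma T t) - f s - D * (ts_sigma T t - s)\<bar> \<le> \<epsilon> * \<bar>ts_sigma T t - s\<bar>)"

definition ts_exp :: "real set \<Rightarrow> (real \<Rightarrow> real) \<Rightarrow> real \<Rightarrow> real \<Rightarrow> real" where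
  "ts_exp T l t t0 = (THE v. \<exists>\<phi>. \<phi> t0 = 1 \<and>
      (\<forall>s\<in>ts_kappa T. has_delta_derivative T \<phi> (l s * \<phi> s) s) \<and> \<phi> t = v)"

end

theory Submission
  imports Defs
begin


lemma sigma_ge: "s \<le> ts_sigma T s"
  unfolding ts_sigma_def by (auto intro!: cInf_greatest)

lemma sigma_le: "r \<in> T \<Longrightarrow> s < r \<Longrightarrow> ts_sigma T s \<le> r"
  unfolding ts_sigma_def by (auto intro!: cInf_lower bdd_belowI[where m=s])

lemma sigma_eq: "{u \<in> T. u > s} \<noteq> {} \<Longrightarrow> ts_sigma T s = Inf {u \<in> T. u > s}"
  unfolding ts_sigma_def by (rule if_not_P)

lemma sigma_in: assumes "closed T" "r \<in> T" "s < r" shows "ts_sigma T s \<in> T"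
proof -
  have ne: "{u \<in> T. u > s} \<noteq> {}" using assms by auto
  have "Inf {u \<in> T. u > s} \<in> closure {u \<in> T. u > s}"
    by (rule closure_contains_Inf[OF ne]) (auto intro!: bdd_belowI[where m=s])
  also have "\<dots> \<subseteq> closure T" by (rule closure_mono) auto
  finally show ?thesis using ne assms(1) sigma_eq[OF ne] by (simp add: closure_closed)
qed

lemma sigma_rd: assumes "ts_sigma T s = s" "r \<in> T" "s < r" "e > 0"
  shows "\<exists>u\<in>T. s < u \<and> u < s + e"
proof -
  have ne: "{u \<in> T. u > s} \<noteq> {}" using assms by auto
  hence "Inf {u \<in> T. u > s} < s + e" using assms sigma_eq[OF ne] by simp
  from cInf_lessD[OF ne this] show ?thesis by auto
qed

lemma quot_eq: fixes f :: "real \<Rightarrow> real" assumes "r \<noteq> s"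
  shows "\<bar>f s - f r - D * (s - r)\<bar> = \<bar>r - s\<bar> * \<bar>(f r - f s) / (r - s) - D\<bar>"
proof -
  have "f s - f r - D * (s - r) = - ((r - s) * ((f r - f s) / (r - s) - D))"
    using assms by (simp add: field_simps)
  thus ?thesis by (simp add: abs_mult)
qed

lemma delta_rd_iff: assumes "ts_sigma T s = s"
  shows "has_delta_derivative T f D s \<longleftrightarrow> (f has_real_derivative D) (at s within T)"
proof
  assume H: "has_delta_derivative T f D s"
  show "(f has_real_derivative D) (at s within T)"
    unfolding has_field_derivative_iff tendsto_iff eventually_at
  proof (intro allI impI)
    fix e :: real assume e: "e > 0"
    from H[unfolded has_delta_derivative_def assms, rule_format, of "e/2"] e
    obtain d where d: "d > 0" "\<forall>r\<in>T. \<bar>r - s\<bar> < d \<longrightarrow> \<bar>f s - f r - D * (s - r)\<bar> \<le> e/2 * \<bar>s - r\<bar>"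
      by auto
    show "\<exists>d>0. \<forall>x\<in>T. x \<noteq> s \<and> dist x s < d \<longrightarrow> dist ((f x - f s) / (x - s)) D < e"
    proof (intro exI[of _ d] conjI ballI impI)
      fix x assume x: "x \<in> T" "x \<noteq> s \<and> dist x s < d"
      hence "\<bar>x - s\<bar> * \<bar>(f x - f s) / (x - s) - D\<bar> \<le> e/2 * \<bar>x - s\<bar>"
        using d quot_eq[of x s f D] by (auto simp: dist_real_def abs_minus_commute)
      hence "\<bar>(f x - f s) / (x - s) - D\<bar> \<le> e/2" using x by (simp add: mult.commute)
      thus "dist ((f x - f s) / (x - s)) D < e" using e by (simp add: dist_real_def)
    qed (use d in auto)
  qed
next
  assume H: "(f has_real_derivative D) (at s within T)"
  show "has_delta_derivative T f D s" unfolding has_delta_derivative_def assms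
  proof (intro allI impI)
    fix e :: real assume e: "e > 0"
    from H[unfolded has_field_derivative_iff tendsto_iff eventually_at, rule_format, OF e]
    obtain d where d: "d > 0" "\<forall>x\<in>T. x \<noteq> s \<and> dist x s < d \<longrightarrow> dist ((f x - f s) / (x - s)) D < e"
      by auto
    show "\<exists>d>0. \<forall>r\<in>T. \<bar>r - s\<bar> < d \<longrightarrow> \<bar>f s - f r - D * (s - r)\<bar> \<le> e * \<bar>s - r\<bar>"
    proof (intro exI[of _ d] conjI ballI impI)
      fix r assume r: "r \<in> T" "\<bar>r - s\<bar> < d"
      show "\<bar>f s - f r - D * (s - r)\<bar> \<le> e * \<bar>s - r\<bar>"
      proof (cases "r = s")
        case False
        hence "\<bar>(f r - f s) / (r - s) - D\<bar> \<le> e" using d r by (auto simp: dist_real_def)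
        hence "\<bar>r - s\<bar> * \<bar>(f r - f s) / (r - s) - D\<bar> \<le> \<bar>r - s\<bar> * e" by (simp add: mult_left_mono)
        thus ?thesis using quot_eq[OF False, of f D] by (simp add: abs_minus_commute mult.commute)
      qed simp
    qed (use d in auto)
  qed
qed

lemma delta_jump: assumes "has_delta_derivative T f D s" "s \<in> T"
  shows "f (ts_sigma T s) = f s + D * (ts_sigma T s - s)"
proof (rule ccontr)
  define X where "X = f (ts_sigma T s) - f s - D * (ts_sigma T s - s)"
  define c where "c = \<bar>ts_sigma T s - s\<bar>"
  assume "f (ts_sigma T s) \<noteq> f s + D * (ts_sigma T s - s)"
  hence X: "X \<noteq> 0" unfolding X_def by simp
  have c: "c \<ge> 0" unfolding c_def by simp
  have e: "\<bar>X\<bar> / (c + 1) > 0" using X c by simp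
  from assms(1)[unfolded has_delta_derivative_def, rule_format, OF e]
  obtain d where "d > 0" "\<forall>r\<in>T. \<bar>r - s\<bar> < d \<longrightarrow> \<bar>f (ts_sigma T s) - f r - D * (ts_sigma T s - r)\<bar> \<le> \<bar>X\<bar> / (c + 1) * \<bar>ts_sigma T s - r\<bar>"
    by blast
  hence "\<bar>X\<bar> \<le> \<bar>X\<bar> / (c + 1) * c" using assms(2) unfolding X_def c_def by auto
  also have "\<dots> < \<bar>X\<bar>" using X c by (simp add: field_simps)
  finally show False by simp
qed

lemma delta_cont: assumes "has_delta_derivative T f D s" "s \<in> T"
  shows "continuous (at s within T) f"
  unfolding continuous_within_eps_delta
proof (intro allI impI)
  fix e :: real assume e: "e > 0"
  define m where "m = \<bar>ts_sigma T s - s\<bar>"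
  have m: "m \<ge> 0" unfolding m_def by simp
  have e1: "e / (2 * (m + 2)) > 0" using e m by simp
  from assms(1)[unfolded has_delta_derivative_def, rule_format, OF e1]
  obtain d where d: "d > 0" "\<forall>r\<in>T. \<bar>r - s\<bar> < d \<longrightarrow> \<bar>f (ts_sigma T s) - f r - D * (ts_sigma T s - r)\<bar> \<le> e / (2 * (m + 2)) * \<bar>ts_sigma T s - r\<bar>"
    by blast
  have J: "f (ts_sigma T s) = f s + D * (ts_sigma T s - s)" by (rule delta_jump[OF assms])
  define d' where "d' = min d (min 1 (e / (2 * (\<bar>D\<bar> + 1))))"
  have d': "d' > 0" unfolding d'_def using d e by simp
  show "\<exists>d>0. \<forall>x'\<in>T. dist x' s < d \<longrightarrow> dist (f x') (f s) < e"
  proof (intro exI[of _ d'] conjI ballI impI d')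
    fix r assume r: "r \<in> T" "dist r s < d'"
    hence rs: "\<bar>r - s\<bar> < d" "\<bar>r - s\<bar> < 1" "\<bar>r - s\<bar> < e / (2 * (\<bar>D\<bar> + 1))"
      unfolding d'_def by (auto simp: dist_real_def)
    have A: "\<bar>f (ts_sigma T s) - f r - D * (ts_sigma T s - r)\<bar> \<le> e / (2 * (m + 2)) * \<bar>ts_sigma T s - r\<bar>"
      using d(2) r rs by blast
    have "\<bar>ts_sigma T s - r\<bar> \<le> m + 2" unfolding m_def using rs by linarith
    hence "e / (2 * (m + 2)) * \<bar>ts_sigma T s - r\<bar> \<le> e / (2 * (m + 2)) * (m + 2)"
      using e m by (intro mult_left_mono) auto
    also have "e / (2 * (m + 2)) * (m + 2) = e / 2" using m by (simp add: field_simps)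
    finally have B: "e / (2 * (m + 2)) * \<bar>ts_sigma T s - r\<bar> \<le> e / 2" .
    have C: "\<bar>D\<bar> * \<bar>r - s\<bar> \<le> \<bar>D\<bar> * (e / (2 * (\<bar>D\<bar> + 1)))"
      using rs(3) by (intro mult_left_mono) auto
    have C2: "\<bar>D\<bar> * (e / (2 * (\<bar>D\<bar> + 1))) < e / 2" using e
      by (simp add: field_simps)
    have "f r - f s = - (f (ts_sigma T s) - f r - D * (ts_sigma T s - r)) + D * (r - s)"
      using J by (simp add: algebra_simps)
    hence "\<bar>f r - f s\<bar> \<le> \<bar>- (f (ts_sigma T s) - f r - D * (ts_sigma T s - r))\<bar> + \<bar>D * (r - s)\<bar>"
      by (metis abs_triangle_ineq)
    hence "\<bar>f r - f s\<bar> \<le> \<bar>f (ts_sigma T s) - f r - D * (ts_sigma T s - r)\<bar> + \<bar>D\<bar> * \<bar>r - s\<bar>"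
      by (simp add: abs_mult)
    hence "\<bar>f r - f s\<bar> < e" using A B C C2 by linarith
    thus "dist (f r) (f s) < e" by (simp add: dist_real_def)
  qed
qed

lemma delta_rs_intro: assumes "s < ts_sigma T s" "s \<in> T"
  and J: "f (ts_sigma T s) = f s + D * (ts_sigma T s - s)"
  and C: "continuous (at s within T) f"
  shows "has_delta_derivative T f D s"
  unfolding has_delta_derivative_def
proof (intro allI impI)
  fix e :: real assume e: "e > 0"
  define m where "m = ts_sigma T s - s"
  have m: "m > 0" using assms unfolding m_def by simp
  have e1: "e * m / 2 > 0" using e m by simp
  from C[unfolded continuous_within_eps_delta, rule_format, OF e1]
  obtain d1 where d1: "d1 > 0" "\<forall>x'\<in>T. dist x' s < d1 \<longrightarrow> dist (f x') (f s) < e * m / 2" by blast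
  define d where "d = min d1 (min m (e * m / (2 * (\<bar>D\<bar> + 1))))"
  have d: "d > 0" unfolding d_def using d1 m e by simp
  show "\<exists>d>0. \<forall>r\<in>T. \<bar>r - s\<bar> < d \<longrightarrow> \<bar>f (ts_sigma T s) - f r - D * (ts_sigma T s - r)\<bar> \<le> e * \<bar>ts_sigma T s - r\<bar>"
  proof (intro exI[of _ d] conjI ballI impI d)
    fix r assume r: "r \<in> T" "\<bar>r - s\<bar> < d"
    hence rs: "\<bar>r - s\<bar> < d1" "\<bar>r - s\<bar> < m" "\<bar>r - s\<bar> < e * m / (2 * (\<bar>D\<bar> + 1))"
      unfolding d_def by auto
    have "r \<le> s"
    proof (rule ccontr)
      assume "\<not> r \<le> s"
      hence "ts_sigma T s \<le> r" using sigma_le[OF r(1)] by simp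
      thus False using rs unfolding m_def by simp
    qed
    have A: "\<bar>f r - f s\<bar> < e * m / 2" using d1(2) r rs by (auto simp: dist_real_def)
    have B: "\<bar>D\<bar> * \<bar>r - s\<bar> \<le> \<bar>D\<bar> * (e * m / (2 * (\<bar>D\<bar> + 1)))"
      using rs(3) by (intro mult_left_mono) auto
    have B2: "\<bar>D\<bar> * (e * m / (2 * (\<bar>D\<bar> + 1))) \<le> e * m / 2" using e m
      by (simp add: field_simps)
    have "f (ts_sigma T s) - f r - D * (ts_sigma T s - r) = (f s - f r) - D * (s - r)"
      using J by (simp add: algebra_simps)
    hence "\<bar>f (ts_sigma T s) - f r - D * (ts_sigma T s - r)\<bar> = \<bar>(f s - f r) - D * (s - r)\<bar>" by simp
    also have "\<dots> \<le> \<bar>f s - f r\<bar> + \<bar>D * (s - r)\<bar>" by (rule abs_triangle_ineq4)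
    also have "\<dots> = \<bar>f r - f s\<bar> + \<bar>D\<bar> * \<bar>r - s\<bar>" by (simp add: abs_mult abs_minus_commute)
    also have "\<dots> \<le> e * m" using A B B2 by linarith
    also have "\<dots> \<le> e * \<bar>ts_sigma T s - r\<bar>" using e \<open>r \<le> s\<close> unfolding m_def by simp
    finally show "\<bar>f (ts_sigma T s) - f r - D * (ts_sigma T s - r)\<bar> \<le> e * \<bar>ts_sigma T s - r\<bar>" .
  qed
qed



lemma ts_mono:
  fixes F :: "real \<Rightarrow> real"
  assumes T: "closed T" and a: "a \<in> T" and b: "b \<in> T" and ab: "a \<le> b"
  and rs: "\<And>s. s \<in> T \<Longrightarrow> a \<le> s \<Longrightarrow> s < b \<Longrightarrow> s < ts_sigma T s \<Longrightarrow> F (ts_sigma T s) \<le> F s"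
  and rd: "\<And>s. s \<in> T \<Longrightarrow> a \<le> s \<Longrightarrow> s < b \<Longrightarrow> ts_sigma T s = s \<Longrightarrow>
              \<exists>D\<le>0. (F has_real_derivative D) (at s within T)"
  and ct: "\<And>s. s \<in> T \<Longrightarrow> a < s \<Longrightarrow> s \<le> b \<Longrightarrow> (\<forall>d>0. \<exists>r\<in>T. s - d < r \<and> r < s) \<Longrightarrow>
              continuous (at s within T) F"
  shows "F b \<le> F a"
proof -
  have main: "F b \<le> F a + e * (b - a)" if e: "e > 0" for e
  proof -
    define P where "P u \<longleftrightarrow> F u \<le> F a + e * (u - a)" for u
    define A where "A = {r \<in> T. a \<le> r \<and> r \<le> b \<and> (\<forall>u\<in>T. a \<le> u \<and> u \<le> r \<longrightarrow> P u)}"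
    have aA: "a \<in> A" unfolding A_def P_def using a ab by auto
    have bdd: "bdd_above A" unfolding A_def by (auto intro!: bdd_aboveI[where M=b])
    define m where "m = Sup A"
    have am: "a \<le> m" unfolding m_def using aA bdd by (rule cSup_upper)
    have mb: "m \<le> b" unfolding m_def using aA by (intro cSup_least) (auto simp: A_def)
    have "m \<in> closure A" unfolding m_def using aA bdd by (intro closure_contains_Sup) auto
    also have "closure A \<subseteq> closure T" by (rule closure_mono) (auto simp: A_def)
    finally have mT: "m \<in> T" using T by (simp add: closure_closed)
    have below: "P u" if uu: "u \<in> T" "a \<le> u" "u < m" for u
    proof -
      obtain r where "r \<in> A" "u < r" using less_cSupD[of A u] aA uu unfolding m_def by blast
      thus ?thesis using uu unfolding A_def by auto
    qed
    have Pm: "P m"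
    proof (cases "\<forall>d>0. \<exists>r\<in>T. m - d < r \<and> r < m")
      case True
      show ?thesis
      proof (cases "m = a")
        case True thus ?thesis by (simp add: P_def)
      next
        case False
        hence am': "a < m" using am by simp
        show ?thesis
        proof (rule ccontr)
          assume nP: "\<not> P m"
          define eps where "eps = F m - F a - e * (m - a)"
          have eps: "eps > 0" using nP unfolding P_def eps_def by simp
          from ct[OF mT am' mb True, unfolded continuous_within_eps_delta, rule_format, OF eps]
          obtain d where d: "d > 0" "\<forall>x'\<in>T. dist x' m < d \<longrightarrow> dist (F x') (F m) < eps" by blast
          from True[rule_format, of "min d (m - a)"] d am' obtain r where
            r: "r \<in> T" "m - min d (m - a) < r" "r < m" by auto
          have "P r" using below[OF r(1) _ r(3)] r by simp
          moreover have "\<bar>F r - F m\<bar> < eps" using d r by (auto simp: dist_real_def)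
          moreover have "e * (r - a) \<le> e * (m - a)" using e r by simp
          ultimately show False unfolding P_def eps_def by linarith
        qed
      qed
    next
      case False
      then obtain d where d: "d > 0" "\<forall>r\<in>T. \<not> (m - d < r \<and> r < m)" by auto
      obtain r where r: "r \<in> A" "m - d < r" using less_cSupD[of A "m - d"] aA d unfolding m_def by auto
      have "r \<le> m" unfolding m_def using r bdd by (intro cSup_upper)
      moreover have "r \<in> T" using r unfolding A_def by auto
      ultimately have "r = m" using d r by force
      thus ?thesis using r unfolding A_def by auto
    qed
    have mA: "m \<in> A" unfolding A_def using mT am mb below Pm by (auto simp: le_less)
    have "m = b"
    proof (rule ccontr)
      assume "m \<noteq> b"
      hence mb': "m < b" using mb by simp
      show False
      proof (cases "m < ts_sigma T m")
        case True
        define \<sigma> where "\<sigma> = ts_sigma T m"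
        have sT: "\<sigma> \<in> T" unfolding \<sigma>_def by (rule sigma_in[OF T b mb'])
        have sb: "\<sigma> \<le> b" unfolding \<sigma>_def by (rule sigma_le[OF b mb'])
        have "F \<sigma> \<le> F m" unfolding \<sigma>_def by (rule rs[OF mT am mb' True])
        moreover have "e * (m - a) \<le> e * (\<sigma> - a)" using e True unfolding \<sigma>_def by simp
        ultimately have Ps: "P \<sigma>" using Pm unfolding P_def by linarith
        have "\<sigma> \<in> A" unfolding A_def
        proof (intro CollectI conjI ballI impI)
          fix u assume u: "u \<in> T" "a \<le> u \<and> u \<le> \<sigma>"
          show "P u"
          proof (cases "u \<le> m")
            case True thus ?thesis using mA u unfolding A_def by auto
          next
            case False
            hence "\<sigma> \<le> u" unfolding \<sigma>_def using sigma_le[OF u(1)] by simp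
            hence "u = \<sigma>" using u by simp
            thus ?thesis using Ps by simp
          qed
        qed (use sT sb am True \<sigma>_def in auto)
        hence "\<sigma> \<le> m" unfolding m_def using bdd by (intro cSup_upper)
        thus False using True unfolding \<sigma>_def by simp
      next
        case False
        hence sm: "ts_sigma T m = m" using sigma_ge[of m T] by simp
        obtain D where D: "D \<le> 0" "(F has_real_derivative D) (at m within T)"
          using rd[OF mT am mb' sm] by blast
        from D(2)[unfolded has_field_derivative_iff tendsto_iff eventually_at, rule_format, OF e]
        obtain d where d: "d > 0" "\<forall>x\<in>T. x \<noteq> m \<and> dist x m < d \<longrightarrow> dist ((F x - F m) / (x - m)) D < e"
          by blast
        obtain r where r: "r \<in> T" "m < r" "r < m + min d (b - m)"
          using sigma_rd[OF sm b mb', of "min d (b - m)"] d mb' by auto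
        have "r \<in> A" unfolding A_def
        proof (intro CollectI conjI ballI impI)
          fix u assume u: "u \<in> T" "a \<le> u \<and> u \<le> r"
          show "P u"
          proof (cases "u \<le> m")
            case True thus ?thesis using mA u unfolding A_def by auto
          next
            case False
            hence um: "m < u" by simp
            hence "dist ((F u - F m) / (u - m)) D < e" using d u r by (auto simp: dist_real_def)
            hence "(F u - F m) / (u - m) < e" using D(1) by (auto simp: dist_real_def)
            hence "F u - F m < e * (u - m)" using um by (simp add: divide_less_eq)
            thus ?thesis using Pm unfolding P_def by (simp add: algebra_simps)
          qed
        qed (use r am in auto)
        hence "r \<le> m" unfolding m_def using bdd by (intro cSup_upper)
        thus False using r by simp
      qed
    qed
    thus ?thesis using Pm unfolding P_def by simp
  qed
  show ?thesis
  proof (cases "a = b")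
    case False
    hence ba: "b - a > 0" using ab by simp
    show ?thesis
    proof (rule field_le_epsilon)
      fix e :: real assume "e > 0"
      hence "F b \<le> F a + e / (b - a) * (b - a)" using main[of "e / (b - a)"] ba by simp
      thus "F b \<le> F a + e" using ba by simp
    qed
  qed simp
qed



definition Rs :: "real set \<Rightarrow> real set" where "Rs T = {u \<in> T. u < ts_sigma T u}"
definition hn :: "real \<Rightarrow> real \<Rightarrow> real" where "hn k x = k * x - ln (1 + k * x)"
definition SS :: "real set \<Rightarrow> real \<Rightarrow> real \<Rightarrow> real \<Rightarrow> real" where
  "SS T k a b = infsum (\<lambda>u. hn k (ts_mu T u)) (Rs T \<inter> {a..<b})"
definition gg :: "real set \<Rightarrow> real \<Rightarrow> real \<Rightarrow> real \<Rightarrow> real" where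
  "gg T k t0 t = k * (t - t0) - (SS T k t0 t - SS T k t t0)"

lemma quad_deriv: fixes f :: "real \<Rightarrow> real"
  assumes C: "C \<ge> 0" and H: "\<And>r. r \<in> T \<Longrightarrow> \<bar>f r - f s - D * (r - s)\<bar> \<le> C * (r - s)\<^sup>2"
  shows "(f has_real_derivative D) (at s within T)"
  unfolding has_field_derivative_iff tendsto_iff eventually_at
proof (intro allI impI)
  fix e :: real assume e: "e > 0"
  show "\<exists>d>0. \<forall>x\<in>T. x \<noteq> s \<and> dist x s < d \<longrightarrow> dist ((f x - f s) / (x - s)) D < e"
  proof (intro exI[of _ "e / (C + 1)"] conjI ballI impI)
    fix x assume x: "x \<in> T" "x \<noteq> s \<and> dist x s < e / (C + 1)"
    hence xs: "\<bar>x - s\<bar> > 0" "\<bar>x - s\<bar> < e / (C + 1)" by (auto simp: dist_real_def)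
    have "(f x - f s) / (x - s) - D = (f x - f s - D * (x - s)) / (x - s)" using x by (simp add: field_simps)
    hence "\<bar>(f x - f s) / (x - s) - D\<bar> = \<bar>f x - f s - D * (x - s)\<bar> / \<bar>x - s\<bar>" by simp
    also have "\<dots> \<le> C * (x - s)\<^sup>2 / \<bar>x - s\<bar>" using H[OF x(1)] xs by (intro divide_right_mono) auto
    also have "C * (x - s)\<^sup>2 / \<bar>x - s\<bar> = C * \<bar>x - s\<bar>"
      using x by (cases "s < x") (simp_all add: power2_eq_square abs_if field_simps)
    also have "\<dots> \<le> C * (e / (C + 1))" using C xs by (intro mult_left_mono) auto
    also have "\<dots> < e" using C e by (simp add: field_simps)
    finally show "dist ((f x - f s) / (x - s)) D < e" by (simp add: dist_real_def)
  qed (use e C in simp)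
qed

lemma mu_fin:
  assumes "b \<in> T" "finite F" "F \<subseteq> Rs T \<inter> {a..<b}" "a \<le> b"
  shows "sum (ts_mu T) F \<le> b - a"
  using assms
proof (induction "card F" arbitrary: F b rule: less_induct)
  case less
  show ?case
  proof (cases "F = {}")
    case True thus ?thesis using less by simp
  next
    case False
    define m where "m = Max F"
    have mF: "m \<in> F" unfolding m_def using False less by simp
    have mT: "m \<in> T" "a \<le> m" "m < b" "m < ts_sigma T m" using mF less(4) by (auto simp: Rs_def)
    have sub: "F - {m} \<subseteq> Rs T \<inter> {a..<m}"
    proof
      fix u assume u: "u \<in> F - {m}"
      hence "u \<le> m" unfolding m_def using less by simp
      thus "u \<in> Rs T \<inter> {a..<m}" using u less(4) by auto
    qed
    have cl: "card (F - {m}) < card F" by (rule card_Diff1_less[OF less(3) mF])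
    have IH: "sum (ts_mu T) (F - {m}) \<le> m - a"
      using less(1)[OF cl mT(1)] less(3) sub mT by simp
    have "ts_mu T m \<le> b - m" using sigma_le[OF less(2) mT(3)] unfolding ts_mu_def by simp
    moreover have "sum (ts_mu T) F = ts_mu T m + sum (ts_mu T) (F - {m})"
      using mF less(3) by (simp add: sum.remove)
    ultimately show ?thesis using IH by simp
  qed
qed

lemma mu_nonneg: "u \<in> Rs T \<Longrightarrow> ts_mu T u \<ge> 0"
  unfolding Rs_def ts_mu_def by simp

lemma mu_summable:
  assumes "b \<in> T"
  shows "(ts_mu T) summable_on (Rs T \<inter> {a..<b})" "a \<le> b \<Longrightarrow> infsum (ts_mu T) (Rs T \<inter> {a..<b}) \<le> b - a"
proof -
  show S: "(ts_mu T) summable_on (Rs T \<inter> {a..<b})"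
  proof (cases "a \<le> b")
    case True
    show ?thesis
    proof (rule nonneg_bdd_above_summable_on)
      show "bdd_above (sum (ts_mu T) ` {F. F \<subseteq> Rs T \<inter> {a..<b} \<and> finite F})"
        by (rule bdd_aboveI[where M="b-a"]) (use mu_fin[OF assms _ _ True] in blast)
    qed (simp add: mu_nonneg)
  qed simp
  show "a \<le> b \<Longrightarrow> infsum (ts_mu T) (Rs T \<inter> {a..<b}) \<le> b - a"
    by (rule infsum_le_finite_sums[OF S]) (rule mu_fin[OF assms])
qed

lemma hn_bounds:
  fixes k x :: real assumes k: "k > 0" and x: "x \<ge> 0"
  shows "0 \<le> hn k x" "hn k x \<le> k * x" "hn k x \<le> k\<^sup>2 * x\<^sup>2"
proof -
  have kx: "k * x \<ge> 0" using k x by simp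
  show "0 \<le> hn k x" unfolding hn_def using ln_add_one_self_le_self[OF kx] by simp
  show "hn k x \<le> k * x" unfolding hn_def using kx by simp
  show "hn k x \<le> k\<^sup>2 * x\<^sup>2"
  proof (cases "k * x \<le> 1")
    case True
    from ln_one_plus_pos_lower_bound[OF kx True] show ?thesis unfolding hn_def by (simp add: power_mult_distrib)
  next
    case False
    hence "k * x * 1 \<le> k * x * (k * x)" using kx by (intro mult_left_mono) auto
    hence "k * x \<le> (k * x)\<^sup>2" by (simp add: power2_eq_square)
    moreover have "ln (1 + k * x) \<ge> 0" using kx by simp
    ultimately show ?thesis unfolding hn_def by (simp add: power_mult_distrib)
  qed
qed

lemma hn_summable:
  assumes "b \<in> T" "k > 0"
  shows "(\<lambda>u. hn k (ts_mu T u)) summable_on (Rs T \<inter> {a..<b})"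
  by (rule summable_on_comparison_test[OF summable_on_cmult_right[OF mu_summable(1)[OF assms(1)], of k]])
     (auto intro!: hn_bounds assms mu_nonneg)

lemma SS_empty: "b \<le> a \<Longrightarrow> SS T k a b = 0"
  unfolding SS_def by simp

lemma SS_split:
  assumes "x \<le> y" "y \<le> z" "y \<in> T" "z \<in> T" "k > 0"
  shows "SS T k x z = SS T k x y + SS T k y z"
proof -
  have "Rs T \<inter> {x..<z} = (Rs T \<inter> {x..<y}) \<union> (Rs T \<inter> {y..<z})" using assms by auto
  thus ?thesis unfolding SS_def
    by (simp only:) (rule infsum_Un_disjoint[OF hn_summable[OF assms(3,5)] hn_summable[OF assms(4,5)]], auto)
qed

lemma SS_bound:
  assumes "s \<in> T" "r \<le> s" "k > 0"
  shows "0 \<le> SS T k r s" "SS T k r s \<le> k\<^sup>2 * (s - r)\<^sup>2"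
proof -
  show "0 \<le> SS T k r s" unfolding SS_def
    by (rule infsum_nonneg) (auto intro!: hn_bounds assms mu_nonneg)
  have c: "k\<^sup>2 * (s - r) \<ge> 0" using assms by simp
  have "SS T k r s \<le> infsum (\<lambda>u. k\<^sup>2 * (s - r) * ts_mu T u) (Rs T \<inter> {r..<s})"
    unfolding SS_def
  proof (rule infsum_mono[OF hn_summable[OF assms(1,3)] summable_on_cmult_right[OF mu_summable(1)[OF assms(1)]]])
    fix u assume u: "u \<in> Rs T \<inter> {r..<s}"
    have m0: "ts_mu T u \<ge> 0" using u mu_nonneg by auto
    have "ts_mu T u \<le> s - u" using sigma_le[OF assms(1), of u] u unfolding ts_mu_def by auto
    hence ms: "ts_mu T u \<le> s - r" using u by auto
    have "hn k (ts_mu T u) \<le> k\<^sup>2 * (ts_mu T u)\<^sup>2" by (rule hn_bounds(3)[OF assms(3) m0])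
    also have "\<dots> = k\<^sup>2 * ts_mu T u * ts_mu T u" by (simp add: power2_eq_square)
    also have "\<dots> \<le> k\<^sup>2 * (s - r) * ts_mu T u" using ms m0
      by (intro mult_right_mono mult_left_mono) auto
    finally show "hn k (ts_mu T u) \<le> k\<^sup>2 * (s - r) * ts_mu T u" .
  qed
  also have "\<dots> = k\<^sup>2 * (s - r) * infsum (ts_mu T) (Rs T \<inter> {r..<s})"
    by (rule infsum_cmult_right) (rule mu_summable(1)[OF assms(1)])
  also have "\<dots> \<le> k\<^sup>2 * (s - r) * (s - r)"
    by (rule mult_left_mono[OF mu_summable(2)[OF assms(1,2)] c])
  finally show "SS T k r s \<le> k\<^sup>2 * (s - r)\<^sup>2" by (simp add: power2_eq_square mult.assoc)
qed



lemma gg_diff: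
  assumes "a \<in> T" "b \<in> T" "a \<le> b" "t0 \<in> T" "k > 0"
  shows "gg T k t0 b - gg T k t0 a = k * (b - a) - SS T k a b"
proof -
  consider "t0 \<le> a" | "a \<le> t0" "t0 \<le> b" | "b \<le> t0" using assms by linarith
  thus ?thesis
  proof cases
    case 1
    have "SS T k t0 b = SS T k t0 a + SS T k a b" using 1 assms by (intro SS_split) auto
    thus ?thesis using 1 assms unfolding gg_def by (simp add: SS_empty algebra_simps)
  next
    case 2
    have "SS T k a b = SS T k a t0 + SS T k t0 b" using 2 assms by (intro SS_split) auto
    thus ?thesis using 2 assms unfolding gg_def by (simp add: SS_empty algebra_simps)
  next
    case 3
    have "SS T k a t0 = SS T k a b + SS T k b t0" using 3 assms by (intro SS_split) auto
    thus ?thesis using 3 assms unfolding gg_def by (simp add: SS_empty algebra_simps)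
  qed
qed

lemma gg_quad:
  assumes "r \<in> T" "s \<in> T" "t0 \<in> T" "k > 0"
  shows "\<bar>gg T k t0 r - gg T k t0 s - k * (r - s)\<bar> \<le> k\<^sup>2 * (r - s)\<^sup>2"
proof (cases "s \<le> r")
  case True
  have "gg T k t0 r - gg T k t0 s - k * (r - s) = - SS T k s r" using gg_diff[OF assms(2,1) True assms(3,4)] by simp
  thus ?thesis using SS_bound[OF assms(1) True assms(4)] by simp
next
  case False
  hence F: "r \<le> s" by simp
  have "gg T k t0 r - gg T k t0 s - k * (r - s) = SS T k r s" using gg_diff[OF assms(1,2) F assms(3,4)] by (simp add: algebra_simps)
  moreover have "(r - s)\<^sup>2 = (s - r)\<^sup>2" by (simp add: power2_commute)
  ultimately show ?thesis using SS_bound[OF assms(2) F assms(4)] by simp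
qed

lemma gg_deriv:
  assumes "s \<in> T" "t0 \<in> T" "k > 0"
  shows "(gg T k t0 has_real_derivative k) (at s within T)"
  by (rule quad_deriv[where C="k\<^sup>2"]) (auto intro!: gg_quad assms)

lemma gg_jump:
  assumes T: "closed T" and s: "s \<in> T" "s < ts_sigma T s" and "t0 \<in> T" "k > 0"
  shows "gg T k t0 (ts_sigma T s) = gg T k t0 s + ln (1 + k * (ts_sigma T s - s))"
proof -
  have ne: "{u \<in> T. u > s} \<noteq> {}"
  proof
    assume "{u \<in> T. u > s} = {}"
    hence "ts_sigma T s = s" unfolding ts_sigma_def by simp
    thus False using s by simp
  qed
  then obtain r where r: "r \<in> T" "s < r" by auto
  have sT: "ts_sigma T s \<in> T" by (rule sigma_in[OF T r])
  have set: "Rs T \<inter> {s..<ts_sigma T s} = {s}"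
  proof
    show "{s} \<subseteq> Rs T \<inter> {s..<ts_sigma T s}" using s by (auto simp: Rs_def)
    show "Rs T \<inter> {s..<ts_sigma T s} \<subseteq> {s}"
    proof
      fix u assume u: "u \<in> Rs T \<inter> {s..<ts_sigma T s}"
      have "\<not> s < u"
      proof
        assume "s < u"
        hence "ts_sigma T s \<le> u" using u by (intro sigma_le) (auto simp: Rs_def)
        thus False using u by simp
      qed
      thus "u \<in> {s}" using u by simp
    qed
  qed
  have "SS T k s (ts_sigma T s) = hn k (ts_mu T s)" unfolding SS_def set by simp
  hence "gg T k t0 (ts_sigma T s) - gg T k t0 s = k * (ts_sigma T s - s) - hn k (ts_sigma T s - s)"
    using gg_diff[OF s(1) sT _ assms(4,5)] s by (simp add: ts_mu_def)
  thus ?thesis unfolding hn_def by simp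
qed

lemma EE_props:
  assumes T: "closed T" and t0: "t0 \<in> T" and k: "k > 0"
  shows "(\<lambda>x. exp (gg T k t0 x)) t0 = 1"
    and "\<And>s. s \<in> T \<Longrightarrow> has_delta_derivative T (\<lambda>x. exp (gg T k t0 x)) (k * exp (gg T k t0 s)) s"
proof -
  show "(\<lambda>x. exp (gg T k t0 x)) t0 = 1" unfolding gg_def by simp
  fix s assume s: "s \<in> T"
  have D: "((\<lambda>x. exp (gg T k t0 x)) has_real_derivative exp (gg T k t0 s) * k) (at s within T)"
    by (rule DERIV_chain2[OF DERIV_exp gg_deriv[OF s t0 k]])
  show "has_delta_derivative T (\<lambda>x. exp (gg T k t0 x)) (k * exp (gg T k t0 s)) s"
  proof (cases "ts_sigma T s = s")
    case True
    show ?thesis unfolding delta_rd_iff[OF True] using D by (simp add: mult.commute)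
  next
    case False
    hence lt: "s < ts_sigma T s" using sigma_ge[of s T] by simp
    have pos: "1 + k * (ts_sigma T s - s) > 0" using lt k by (simp add: add_pos_nonneg)
    show ?thesis
    proof (rule delta_rs_intro[OF lt s])
      show "exp (gg T k t0 (ts_sigma T s)) = exp (gg T k t0 s) + k * exp (gg T k t0 s) * (ts_sigma T s - s)"
        using gg_jump[OF T s lt t0 k] pos by (simp add: exp_add algebra_simps)
      show "continuous (at s within T) (\<lambda>x. exp (gg T k t0 x))" by (rule DERIV_continuous[OF D])
    qed
  qed
qed



lemma kappa_mem: assumes "s \<in> T" "\<not> ((\<forall>u\<in>T. u \<le> s) \<and> ts_rho T s < s)"
  shows "s \<in> ts_kappa T"
proof (cases "\<exists>m\<in>T. (\<forall>u\<in>T. u \<le> m) \<and> ts_rho T m < m")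
  case True
  then obtain m where m: "m \<in> T" "\<forall>u\<in>T. u \<le> m" "ts_rho T m < m" by blast
  have "s \<noteq> m" using assms m by blast
  hence "s \<notin> {m. m \<in> T \<and> (\<forall>u\<in>T. u \<le> m)}" using m assms(1) by (auto intro: antisym)
  hence "s \<in> T - {m. m \<in> T \<and> (\<forall>u\<in>T. u \<le> m)}" using assms(1) by blast
  thus ?thesis unfolding ts_kappa_def using True by (simp only: if_True)
next
  case False
  thus ?thesis unfolding ts_kappa_def using assms(1) by (simp only: if_False)
qed

lemma left_dense_kappa:
  assumes s: "s \<in> T" and ld: "\<forall>d>0. \<exists>r\<in>T. s - d < r \<and> r < s"
  shows "s \<in> ts_kappa T"
proof (rule kappa_mem[OF s], rule notI)
  assume H: "(\<forall>u\<in>T. u \<le> s) \<and> ts_rho T s < s"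
  have "\<exists>r\<in>T. s - 1 < r \<and> r < s" using ld by simp
  then obtain r0 where r0: "r0 \<in> T" "r0 < s" by blast
  have ne: "{u \<in> T. u < s} \<noteq> {}" using r0 by blast
  have rho: "ts_rho T s = Sup {u \<in> T. u < s}" unfolding ts_rho_def using ne by (rule if_not_P)
  have "s - ts_rho T s > 0" using H by simp
  hence "\<exists>r\<in>T. s - (s - ts_rho T s) < r \<and> r < s" using ld by blast
  then obtain r where r: "r \<in> T" "ts_rho T s < r" "r < s" by auto
  have bdd: "bdd_above {u \<in> T. u < s}" by (rule bdd_aboveI[where M=s]) simp
  have "r \<le> Sup {u \<in> T. u < s}" using r by (intro cSup_upper[OF _ bdd]) simp
  thus False using r rho by simp
qed

lemma lt_kappa: assumes "s \<in> T" "t \<in> T" "s < t" shows "s \<in> ts_kappa T"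
proof (rule kappa_mem[OF assms(1)])
  have "\<not> (\<forall>u\<in>T. u \<le> s)" using assms by (metis not_le)
  thus "\<not> ((\<forall>u\<in>T. u \<le> s) \<and> ts_rho T s < s)" by blast
qed

lemma cont_div: fixes f g :: "real \<Rightarrow> real"
  assumes "continuous (at s within T) f" "continuous (at s within T) g" "g s \<noteq> 0"
  shows "continuous (at s within T) (\<lambda>x. f x / g x)"
  using assms unfolding continuous_within by (intro tendsto_divide) auto


lemma alg2: fixes a b p q :: real
  shows "2*a*b + 2*b*(-p*b - q*a) \<le> 2*(1+\<bar>p\<bar>+\<bar>q\<bar>)*(a\<^sup>2+b\<^sup>2)"
proof -
  have h1: "2*\<bar>a*b\<bar> \<le> a\<^sup>2+b\<^sup>2"
  proof -
    have "0 \<le> (\<bar>a\<bar> - \<bar>b\<bar>)\<^sup>2" by simp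
    thus ?thesis by (simp add: algebra_simps power2_eq_square abs_mult)
  qed
  have h2: "-2*q*a*b \<le> \<bar>q\<bar>*(2*\<bar>a*b\<bar>)"
  proof -
    have "-2*q*a*b \<le> \<bar>-2*q*a*b\<bar>" by simp
    thus ?thesis by (simp add: abs_mult)
  qed
  have h3: "\<bar>q\<bar>*(2*\<bar>a*b\<bar>) \<le> \<bar>q\<bar>*(a\<^sup>2+b\<^sup>2)" using h1 by (intro mult_left_mono) auto
  have h4: "-2*p*b\<^sup>2 \<le> 2*\<bar>p\<bar>*(a\<^sup>2+b\<^sup>2)" 
  proof -
    have "-p * b\<^sup>2 \<le> \<bar>p\<bar> * b\<^sup>2" by (intro mult_right_mono) auto
    also have "\<dots> \<le> \<bar>p\<bar> * (a\<^sup>2+b\<^sup>2)" by (intro mult_left_mono) auto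
    finally show ?thesis by simp
  qed
  have h5: "2*a*b \<le> a\<^sup>2+b\<^sup>2" using h1 abs_ge_self[of "a*b"] by linarith
  have "2*a*b + 2*b*(-p*b - q*a) = 2*a*b + (-2*q*a*b) + (-2*p*b\<^sup>2)" by (simp add: algebra_simps power2_eq_square)
  also have "\<dots> \<le> (a\<^sup>2+b\<^sup>2) + \<bar>q\<bar>*(a\<^sup>2+b\<^sup>2) + 2*\<bar>p\<bar>*(a\<^sup>2+b\<^sup>2)" using h2 h3 h4 h5 by linarith
  also have "\<dots> \<le> 2*(1+\<bar>p\<bar>+\<bar>q\<bar>)*(a\<^sup>2+b\<^sup>2)"
  proof -
    have "0 \<le> (1 + \<bar>q\<bar>) * (a\<^sup>2+b\<^sup>2)" by simp
    thus ?thesis by (simp add: algebra_simps)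
  qed
  finally show ?thesis .
qed

lemma algQ: fixes a b p q :: real
  shows "b\<^sup>2 + (p*b + q*a)\<^sup>2 \<le> (1+\<bar>p\<bar>+\<bar>q\<bar>)\<^sup>2*(a\<^sup>2+b\<^sup>2)"
proof -
  have c1: "(p*b + q*a)\<^sup>2 \<le> (\<bar>p\<bar>*\<bar>b\<bar> + \<bar>q\<bar>*\<bar>a\<bar>)\<^sup>2"
  proof -
    have "\<bar>p*b + q*a\<bar> \<le> \<bar>p\<bar>*\<bar>b\<bar> + \<bar>q\<bar>*\<bar>a\<bar>" using abs_triangle_ineq[of "p*b" "q*a"] by (simp add: abs_mult)
    hence "\<bar>p*b + q*a\<bar>\<^sup>2 \<le> (\<bar>p\<bar>*\<bar>b\<bar> + \<bar>q\<bar>*\<bar>a\<bar>)\<^sup>2" by (intro power_mono) auto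
    thus ?thesis by simp
  qed
  have c2: "(\<bar>p\<bar>*\<bar>b\<bar> + \<bar>q\<bar>*\<bar>a\<bar>)\<^sup>2 \<le> (\<bar>p\<bar>+\<bar>q\<bar>)*(\<bar>p\<bar>*b\<^sup>2 + \<bar>q\<bar>*a\<^sup>2)"
  proof -
    have "(\<bar>p\<bar>+\<bar>q\<bar>)*(\<bar>p\<bar>*b\<^sup>2 + \<bar>q\<bar>*a\<^sup>2) - (\<bar>p\<bar>*\<bar>b\<bar> + \<bar>q\<bar>*\<bar>a\<bar>)\<^sup>2 = \<bar>p\<bar>*\<bar>q\<bar>*(\<bar>b\<bar> - \<bar>a\<bar>)\<^sup>2"
      by (simp add: algebra_simps power2_eq_square)
    moreover have "\<bar>p\<bar>*\<bar>q\<bar>*(\<bar>b\<bar> - \<bar>a\<bar>)\<^sup>2 \<ge> 0" by simp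
    ultimately show ?thesis by linarith
  qed
  have c3: "(\<bar>p\<bar>+\<bar>q\<bar>)*(\<bar>p\<bar>*b\<^sup>2 + \<bar>q\<bar>*a\<^sup>2) \<le> (\<bar>p\<bar>+\<bar>q\<bar>)*((\<bar>p\<bar>+\<bar>q\<bar>)*(a\<^sup>2+b\<^sup>2))"
  proof (intro mult_left_mono)
    have "\<bar>p\<bar>*b\<^sup>2 \<le> \<bar>p\<bar>*(a\<^sup>2+b\<^sup>2)" "\<bar>q\<bar>*a\<^sup>2 \<le> \<bar>q\<bar>*(a\<^sup>2+b\<^sup>2)" by (intro mult_left_mono; simp)+
    thus "\<bar>p\<bar>*b\<^sup>2 + \<bar>q\<bar>*a\<^sup>2 \<le> (\<bar>p\<bar>+\<bar>q\<bar>)*(a\<^sup>2+b\<^sup>2)" by (simp add: algebra_simps)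
  qed simp
  have c4: "b\<^sup>2 + (\<bar>p\<bar>+\<bar>q\<bar>)*((\<bar>p\<bar>+\<bar>q\<bar>)*(a\<^sup>2+b\<^sup>2)) \<le> (1+\<bar>p\<bar>+\<bar>q\<bar>)\<^sup>2*(a\<^sup>2+b\<^sup>2)"
  proof -
    have "(1+\<bar>p\<bar>+\<bar>q\<bar>)\<^sup>2*(a\<^sup>2+b\<^sup>2) - (b\<^sup>2 + (\<bar>p\<bar>+\<bar>q\<bar>)*((\<bar>p\<bar>+\<bar>q\<bar>)*(a\<^sup>2+b\<^sup>2))) = a\<^sup>2 + 2*(\<bar>p\<bar>+\<bar>q\<bar>)*(a\<^sup>2+b\<^sup>2)"
      by (simp add: algebra_simps power2_eq_square)
    moreover have "a\<^sup>2 + 2*(\<bar>p\<bar>+\<bar>q\<bar>)*(a\<^sup>2+b\<^sup>2) \<ge> 0" by simp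
    ultimately show ?thesis by linarith
  qed
  show ?thesis using c1 c2 c3 c4 by linarith
qed

lemma alg1: fixes a b p q m :: real assumes m: "m \<ge> 0"
  shows "(a + b*m)\<^sup>2 + (b + (-p*b - q*a)*m)\<^sup>2 \<le> (1 + (1+\<bar>p\<bar>+\<bar>q\<bar>)*m)\<^sup>2 * (a\<^sup>2 + b\<^sup>2)"
proof -
  define k where "k = 1+\<bar>p\<bar>+\<bar>q\<bar>"
  have e1: "(a + b*m)\<^sup>2 + (b + (-p*b - q*a)*m)\<^sup>2 = (a\<^sup>2+b\<^sup>2) + m*(2*a*b + 2*b*(-p*b - q*a)) + m\<^sup>2*(b\<^sup>2 + (p*b + q*a)\<^sup>2)"
    by (simp add: algebra_simps power2_eq_square)
  have e2: "(1 + k*m)\<^sup>2 * (a\<^sup>2 + b\<^sup>2) = (a\<^sup>2+b\<^sup>2) + m*(2*k*(a\<^sup>2+b\<^sup>2)) + m\<^sup>2*(k\<^sup>2*(a\<^sup>2+b\<^sup>2))"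
    by (simp add: algebra_simps power2_eq_square)
  have "m*(2*a*b + 2*b*(-p*b - q*a)) \<le> m*(2*k*(a\<^sup>2+b\<^sup>2))"
    using alg2[of a b p q] m unfolding k_def by (intro mult_left_mono) auto
  moreover have "m\<^sup>2*(b\<^sup>2 + (p*b + q*a)\<^sup>2) \<le> m\<^sup>2*(k\<^sup>2*(a\<^sup>2+b\<^sup>2))"
    using algQ[of b p q a] unfolding k_def by (intro mult_left_mono) auto
  ultimately show ?thesis unfolding e1 k_def[symmetric] e2 by linarith
qed



lemma exp_unique:
  fixes E \<phi> :: "real \<Rightarrow> real"
  assumes T: "closed T" and t0: "t0 \<in> T" and t: "t \<in> T" "t0 \<le> t" and k: "k > 0"
  and E1: "E t0 = 1" and ED: "\<And>s. s \<in> ts_kappa T \<Longrightarrow> has_delta_derivative T E (k * E s) s"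
  and Epos: "\<And>s. s \<in> T \<Longrightarrow> E s > 0"
  and P1: "\<phi> t0 = 1" and PD: "\<And>s. s \<in> ts_kappa T \<Longrightarrow> has_delta_derivative T \<phi> (k * \<phi> s) s"
  shows "\<phi> t = E t"
proof -
  define F where "F x = \<phi> x / E x" for x
  have rs: "F (ts_sigma T s) = F s" if s: "s \<in> T" "t0 \<le> s" "s < t" "s < ts_sigma T s" for s
  proof -
    have sk: "s \<in> ts_kappa T" by (rule lt_kappa[OF s(1) t(1) s(3)])
    have "\<phi> (ts_sigma T s) = \<phi> s * (1 + k * (ts_sigma T s - s))"
      using delta_jump[OF PD[OF sk] s(1)] by (simp add: algebra_simps)
    moreover have "E (ts_sigma T s) = E s * (1 + k * (ts_sigma T s - s))"
      using delta_jump[OF ED[OF sk] s(1)] by (simp add: algebra_simps)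
    moreover have "1 + k * (ts_sigma T s - s) \<noteq> 0" using k s by (smt (verit) mult_pos_pos)
    ultimately show ?thesis unfolding F_def by simp
  qed
  have rd: "((\<lambda>x. \<phi> x / E x) has_real_derivative 0) (at s within T)"
    if s: "s \<in> T" "t0 \<le> s" "s < t" "ts_sigma T s = s" for s
  proof -
    have sk: "s \<in> ts_kappa T" by (rule lt_kappa[OF s(1) t(1) s(3)])
    have "((\<lambda>x. \<phi> x / E x) has_real_derivative (k * \<phi> s * E s - \<phi> s * (k * E s)) / (E s * E s)) (at s within T)"
      using Epos[OF s(1)] PD[OF sk] ED[OF sk] unfolding delta_rd_iff[OF s(4)]
      by (intro DERIV_divide) auto
    thus ?thesis by simp
  qed
  have ct: "continuous (at s within T) F"
    if s: "s \<in> T" "t0 < s" "s \<le> t" "\<forall>d>0. \<exists>r\<in>T. s - d < r \<and> r < s" for s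
  proof -
    have sk: "s \<in> ts_kappa T" by (rule left_dense_kappa[OF s(1) s(4)])
    show ?thesis unfolding F_def
      by (rule cont_div[OF delta_cont[OF PD[OF sk] s(1)] delta_cont[OF ED[OF sk] s(1)]]) (use Epos[OF s(1)] in simp)
  qed
  have rd': "\<exists>D\<le>0. (F has_real_derivative D) (at s within T)"
    if "s \<in> T" "t0 \<le> s" "s < t" "ts_sigma T s = s" for s
    using rd[OF that] unfolding F_def[abs_def] by blast
  have "F t \<le> F t0"
    by (rule ts_mono[OF T t0 t(1) t(2)]) (use rs rd' ct in auto)
  moreover have "(\<lambda>x. - F x) t \<le> (\<lambda>x. - F x) t0"
  proof (rule ts_mono[OF T t0 t(1) t(2)])
    fix s assume "s \<in> T" "t0 \<le> s" "s < t" "ts_sigma T s = s"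
    thus "\<exists>D\<le>0. ((\<lambda>x. - F x) has_real_derivative D) (at s within T)"
      using DERIV_minus[OF rd] unfolding F_def by fastforce
  next
    fix s assume "s \<in> T" "t0 < s" "s \<le> t" "\<forall>d>0. \<exists>r\<in>T. s - d < r \<and> r < s"
    thus "continuous (at s within T) (\<lambda>x. - F x)" using ct by (intro continuous_minus) auto
  qed (use rs in auto)
  ultimately have "F t = 1" using P1 E1 unfolding F_def by simp
  thus ?thesis using Epos[OF t(1)] unfolding F_def by simp
qed



lemma main_bound:
  fixes y y1 y2 E :: "real \<Rightarrow> real"
  assumes T: "closed T" and I: "is_interval I" and t0: "t0 \<in> I \<inter> T" and kdef: "k = 1 + \<bar>p\<bar> + \<bar>q\<bar>"
  and yD: "\<And>t. t \<in> I \<inter> T \<Longrightarrow> has_delta_derivative T y (y1 t) t"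
  and y1D: "\<And>t. t \<in> I \<inter> T \<Longrightarrow> has_delta_derivative T y1 (y2 t) t"
  and eq: "\<And>t. t \<in> I \<inter> T \<Longrightarrow> y2 t + p * y1 t + q * y t = 0"
  and E1: "E t0 = 1" and ED: "\<And>s. s \<in> ts_kappa T \<Longrightarrow> has_delta_derivative T E (k * E s) s"
  and Epos: "\<And>s. s \<in> T \<Longrightarrow> E s > 0"
  and t: "t \<in> I \<inter> T" "t0 \<le> t"
  shows "(y t)\<^sup>2 + (y1 t)\<^sup>2 \<le> ((y t0)\<^sup>2 + (y1 t0)\<^sup>2) * (E t * E t)"
proof -
  have k: "k > 0" using kdef by simp
  have inI: "s \<in> I \<inter> T" if "s \<in> T" "t0 \<le> s" "s \<le> t" for s
    using I t0 t that unfolding is_interval_1 by blast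
  define V where "V x = y x * y x + y1 x * y1 x" for x
  define F where "F x = V x / (E x * E x)" for x
  have y2eq: "y2 s = - p * y1 s - q * y s" if "s \<in> I \<inter> T" for s using eq[OF that] by simp
  have rs: "F (ts_sigma T s) \<le> F s" if s: "s \<in> T" "t0 \<le> s" "s < t" "s < ts_sigma T s" for s
  proof -
    define m where "m = ts_sigma T s - s"
    have m: "m \<ge> 0" using s unfolding m_def by simp
    have sI: "s \<in> I \<inter> T" using inI s by simp
    have sk: "s \<in> ts_kappa T" by (rule lt_kappa[OF s(1) _ s(3)]) (use t in simp)
    have j1: "y (ts_sigma T s) = y s + y1 s * m" using delta_jump[OF yD[OF sI] s(1)] unfolding m_def by simp
    have j2: "y1 (ts_sigma T s) = y1 s + (- p * y1 s - q * y s) * m"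
      using delta_jump[OF y1D[OF sI] s(1)] y2eq[OF sI] unfolding m_def by simp
    have j3: "E (ts_sigma T s) = E s * (1 + k * m)"
      using delta_jump[OF ED[OF sk] s(1)] unfolding m_def by (simp add: algebra_simps)
    define c where "c = (1 + k * m) * (1 + k * m)"
    have c: "c > 0" unfolding c_def using k m by (simp add: add_pos_nonneg)
    have ee: "E s * E s > 0" using Epos[OF s(1)] by simp
    have "V (ts_sigma T s) \<le> c * V s"
      using alg1[OF m, of "y s" "y1 s" p q] unfolding V_def j1 j2 c_def kdef[symmetric]
      by (simp add: power2_eq_square algebra_simps)
    hence "V (ts_sigma T s) / (E s * E s * c) \<le> c * V s / (E s * E s * c)"
      using c ee by (intro divide_right_mono) auto
    also have "c * V s / (E s * E s * c) = V s / (E s * E s)" using c by simp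
    finally show ?thesis unfolding F_def j3 c_def by (simp add: algebra_simps)
  qed
  have rd: "\<exists>D\<le>0. (F has_real_derivative D) (at s within T)"
    if s: "s \<in> T" "t0 \<le> s" "s < t" "ts_sigma T s = s" for s
  proof -
    have sI: "s \<in> I \<inter> T" using inI s by simp
    have sk: "s \<in> ts_kappa T" by (rule lt_kappa[OF s(1) _ s(3)]) (use t in simp)
    have dy: "(y has_real_derivative y1 s) (at s within T)" using yD[OF sI] unfolding delta_rd_iff[OF s(4)] .
    have dy1: "(y1 has_real_derivative y2 s) (at s within T)" using y1D[OF sI] unfolding delta_rd_iff[OF s(4)] .
    have dE: "(E has_real_derivative k * E s) (at s within T)" using ED[OF sk] unfolding delta_rd_iff[OF s(4)] .
    have dV: "(V has_real_derivative (y1 s * y s + y1 s * y s) + (y2 s * y1 s + y2 s * y1 s)) (at s within T)"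
      unfolding V_def[abs_def] by (intro DERIV_add DERIV_mult dy dy1)
    have dEE: "((\<lambda>x. E x * E x) has_real_derivative k * E s * E s + k * E s * E s) (at s within T)"
      by (intro DERIV_mult dE)
    have ee: "E s * E s > 0" using Epos[OF s(1)] by simp
    define D where "D = (((y1 s * y s + y1 s * y s) + (y2 s * y1 s + y2 s * y1 s)) * (E s * E s) - V s * (k * E s * E s + k * E s * E s)) / (E s * E s * (E s * E s))"
    have "(F has_real_derivative D) (at s within T)"
      unfolding F_def[abs_def] D_def using ee by (intro DERIV_divide dV dEE) auto
    moreover have "D \<le> 0"
    proof -
      have "2 * y s * y1 s + 2 * y1 s * y2 s \<le> 2 * k * V s"
        using alg2[of "y s" "y1 s" p q] unfolding y2eq[OF sI] V_def kdef by (simp add: power2_eq_square algebra_simps)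
      hence num: "((y1 s * y s + y1 s * y s) + (y2 s * y1 s + y2 s * y1 s)) * (E s * E s) - V s * (k * E s * E s + k * E s * E s)
                = (E s * E s) * ((2 * y s * y1 s + 2 * y1 s * y2 s) - 2 * k * V s)" by (simp add: algebra_simps)
      have "(E s * E s) * ((2 * y s * y1 s + 2 * y1 s * y2 s) - 2 * k * V s) \<le> 0"
        using ee \<open>2 * y s * y1 s + 2 * y1 s * y2 s \<le> 2 * k * V s\<close> by (intro mult_nonneg_nonpos) auto
      thus ?thesis unfolding D_def num using ee by (intro divide_nonpos_pos) auto
    qed
    ultimately show ?thesis by blast
  qed
  have ct: "continuous (at s within T) F"
    if s: "s \<in> T" "t0 < s" "s \<le> t" "\<forall>d>0. \<exists>r\<in>T. s - d < r \<and> r < s" for s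
  proof -
    have sI: "s \<in> I \<inter> T" using inI s by simp
    have sk: "s \<in> ts_kappa T" by (rule left_dense_kappa[OF s(1) s(4)])
    have cy: "continuous (at s within T) y" by (rule delta_cont[OF yD[OF sI] s(1)])
    have cy1: "continuous (at s within T) y1" by (rule delta_cont[OF y1D[OF sI] s(1)])
    have cE: "continuous (at s within T) E" by (rule delta_cont[OF ED[OF sk] s(1)])
    show ?thesis unfolding F_def[abs_def] V_def
      by (rule cont_div) (use cy cy1 cE Epos[OF s(1)] in \<open>auto intro!: continuous_intros\<close>)
  qed
  have "F t \<le> F t0"
    by (rule ts_mono[OF T _ _ t(2)]) (use rs rd ct t0 t in auto)
  hence "V t / (E t * E t) \<le> V t0" unfolding F_def using E1 by simp
  moreover have "E t * E t > 0" using Epos t by simp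
  ultimately have "V t \<le> V t0 * (E t * E t)" by (simp add: divide_le_eq)
  thus ?thesis unfolding V_def by (simp add: power2_eq_square)
qed


lemma kappa_sub: "s \<in> ts_kappa T \<Longrightarrow> s \<in> T"
  unfolding ts_kappa_def by (simp split: if_split_asm)

theorem theorem2p2:
  fixes T I :: "real set" and t0 p q :: real and y y1 y2 :: "real \<Rightarrow> real"
  assumes "time_scale T"
    and "is_interval I"
    and "t0 \<in> I \<inter> T"
    and "\<And>t. t \<in> I \<inter> T \<Longrightarrow> has_delta_derivative T y (y1 t) t"
    and "\<And>t. t \<in> I \<inter> T \<Longrightarrow> has_delta_derivative T y1 (y2 t) t"
    and "\<And>t. t \<in> I \<inter> T \<Longrightarrow> y2 t + p * y1 t + q * y t = 0"
  shows "\<forall>t\<in>I \<inter> T. t \<ge> t0 \<longrightarrow>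
           sqrt ((y t)\<^sup>2 + (y1 t)\<^sup>2)
             \<le> sqrt ((y t0)\<^sup>2 + (y1 t0)\<^sup>2) * ts_exp T (\<lambda>_. 1 + \<bar>p\<bar> + \<bar>q\<bar>) t t0"
proof (intro ballI impI)
  fix t assume t: "t \<in> I \<inter> T" "t0 \<le> t"
  define k where "k = 1 + \<bar>p\<bar> + \<bar>q\<bar>"
  have k: "k > 0" unfolding k_def by simp
  have T: "closed T" using assms(1) unfolding time_scale_def by simp
  have t0T: "t0 \<in> T" using assms(3) by simp
  define E where "E x = exp (gg T k t0 x)" for x
  have E1: "E t0 = 1" unfolding E_def using EE_props(1)[OF T t0T k] by simp
  have ED: "has_delta_derivative T E (k * E s) s" if "s \<in> ts_kappa T" for s
    unfolding E_def[abs_def] using EE_props(2)[OF T t0T k kappa_sub[OF that]] by simp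
  have Epos: "E s > 0" for s unfolding E_def by simp
  have ex: "ts_exp T (\<lambda>_. 1 + \<bar>p\<bar> + \<bar>q\<bar>) t t0 = E t"
    unfolding ts_exp_def k_def[symmetric]
  proof (rule the_equality)
    show "\<exists>\<phi>. \<phi> t0 = 1 \<and> (\<forall>s\<in>ts_kappa T. has_delta_derivative T \<phi> (k * \<phi> s) s) \<and> \<phi> t = E t"
      using E1 ED by blast
  next
    fix v assume "\<exists>\<phi>. \<phi> t0 = 1 \<and> (\<forall>s\<in>ts_kappa T. has_delta_derivative T \<phi> (k * \<phi> s) s) \<and> \<phi> t = v"
    then obtain \<phi> where \<phi>: "\<phi> t0 = 1" "\<forall>s\<in>ts_kappa T. has_delta_derivative T \<phi> (k * \<phi> s) s" "\<phi> t = v"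
      by blast
    have tT: "t \<in> T" using t by simp
    have PD: "\<And>s. s \<in> ts_kappa T \<Longrightarrow> has_delta_derivative T \<phi> (k * \<phi> s) s" using \<phi>(2) by blast
    have "\<phi> t = E t"
      by (rule exp_unique[where E=E and \<phi>=\<phi> and k=k, OF T t0T tT t(2) k E1 ED Epos \<phi>(1) PD])
    thus "v = E t" using \<phi>(3) by simp
  qed
  have V: "(y t)\<^sup>2 + (y1 t)\<^sup>2 \<le> ((y t0)\<^sup>2 + (y1 t0)\<^sup>2) * (E t * E t)"
    by (rule main_bound[where E=E, OF T assms(2,3) k_def assms(4,5,6) E1 ED Epos t])
  have "sqrt ((y t)\<^sup>2 + (y1 t)\<^sup>2) \<le> sqrt (((y t0)\<^sup>2 + (y1 t0)\<^sup>2) * (E t * E t))"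
    using V by (rule real_sqrt_le_mono)
  also have "\<dots> = sqrt ((y t0)\<^sup>2 + (y1 t0)\<^sup>2) * E t"
    using Epos[of t] by (simp only: real_sqrt_mult real_sqrt_mult_self abs_of_pos)
  finally show "sqrt ((y t)\<^sup>2 + (y1 t)\<^sup>2) \<le> sqrt ((y t0)\<^sup>2 + (y1 t0)\<^sup>2) * ts_exp T (\<lambda>_. 1 + \<bar>p\<bar> + \<bar>q\<bar>) t t0"
    unfolding ex .
qed

end
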